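(* In the modified multi-phase process described in the context, every element $x\in S^+_{3/4}$ that is considered by the process passes the preliminary test and all the following $\eta$ tests with probability at most $2^{-n}$.
   Context: Let $n\ge2$ be an integer such that $m=n/\log_2 n$ is an integer, and let $S'$ be a set of $m$ distinct elements of a totally ordered set. For $\rho\in(0,1]$, $S^-_\rho$ denotes the set of the $\lceil \rho m\rceil$ smallest elements of $S'$ and $S^+_\rho=S'\setminus S^-_\rho$. There are two oracles $\mathcal{O}_1,\mathcal{O}_2$ which can be queried with an element $x\in S'$ and answer "relevant" or "not relevant" in constant time, all answers being mutually independent; for constants $p_1,p_2\in[0,\tfrac12)$: $\mathcal{O}_1$ reports $x$ relevant with probability at least $1-p_1$ if $x\in S^-_{1/6}$ and at most $p_1$ if $x\in S^+_{1/3}$; $\mathcal{O}_2$ reports $x$ relevant with probability at least $1-p_2$ if $x\in S^-_{1/3}$ and at most $p_2$ if $x\in S^+_{3/4}$. For $q\in[0,\tfrac12)$ let $c_q=\lceil 4(1-q)/(1-2q)^2\rceil$. Let $\eta = 1+\lceil \log_2 \frac{n}{\log_2 n}\rceil$. Modified multi-phase process: the elements of $S'$ are considered one at a time. For the current element $x$, a preliminary test is performed consisting of $8c_{p_1}\lceil \ln n\rceil+1$ queries to $\mathcal{O}_1$ on $x$; it is passed if the majority report $x$ relevant, otherwise $x$ is discarded and the next element is considered. Then, for $i=1,\dots,\eta$, the $i$-th test consists of $2\lceil 2^i\ln n\rceil c_{p_2}+1$ queries to $\mathcal{O}_2$ on $x$ and is passed if the majority report $x$ relevant; if $x$ fails a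 test it is discarded and the next element is considered. The process returns the first element that passes the $\eta$-th test. Here $\ln$ is the natural logarithm. *)

theory Defs
  imports "HOL-Probability.Probability"
begin

text \<open>The set of the ceil(rho * |S|) smallest elements of a finite set S.\<close>
definition S_minus :: "'a::linorder set \<Rightarrow> real \<Rightarrow> 'a set" where
  "S_minus S \<rho> = {x \<in> S. card {y \<in> S. y < x} < nat \<lceil>\<rho> * real (card S)\<rceil>}"

definition S_plus :: "'a::linorder set \<Rightarrow> real \<Rightarrow> 'a set" where
  "S_plus S \<rho> = S - S_minus S \<rho>"

definition c_const :: "real \<Rightarrow> nat" where
  "c_const q = nat \<lceil>4 * (1 - q) / (1 - 2 * q)^2\<rceil>"

definition eta :: "nat \<Rightarrow> nat" where
  "eta n = 1 + nat \<lceil>log 2 (real n / log 2 (real n))\<rceil>"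

text \<open>Number of queries in test t: t = 0 is the preliminary test (oracle O1),
  t = i \<ge> 1 is the i-th test (oracle O2).\<close>
definition test_size :: "real \<Rightarrow> real \<Rightarrow> nat \<Rightarrow> nat \<Rightarrow> nat" where
  "test_size p1 p2 n t =
     (if t = 0 then 8 * c_const p1 * nat \<lceil>ln (real n)\<rceil> + 1
      else 2 * nat \<lceil>2 ^ t * ln (real n)\<rceil> * c_const p2 + 1)"

definition query_idx :: "real \<Rightarrow> real \<Rightarrow> nat \<Rightarrow> (nat \<times> nat) set" where
  "query_idx p1 p2 n = {(t, j). t \<le> eta n \<and> j < test_size p1 p2 n t}"

text \<open>Joint distribution of all oracle answers on an element x, where O1 reports x
  relevant with probability r1 and O2 with probability r2, all answers independent.\<close>
definition answers :: "real \<Rightarrow> real \<Rightarrow> nat \<Rightarrow> real \<Rightarrow> real \<Rightarrow> (nat \<times> nat \<Rightarrow> bool) pmf" where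
  "answers p1 p2 n r1 r2 =
     Pi_pmf (query_idx p1 p2 n) False
       (\<lambda>(t, j). bernoulli_pmf (if t = 0 then r1 else r2))"

definition passes_all :: "real \<Rightarrow> real \<Rightarrow> nat \<Rightarrow> (nat \<times> nat \<Rightarrow> bool) set" where
  "passes_all p1 p2 n =
     {\<omega>. \<forall>t \<le> eta n. 2 * card {j. j < test_size p1 p2 n t \<and> \<omega> (t, j)} > test_size p1 p2 n t}"

end

theory Submission
  imports Defs
begin

lemma count_distr:
  fixes T N :: nat and r :: real and I :: "(nat \<times> nat) set" and q :: "nat \<times> nat \<Rightarrow> bool pmf"
  assumes fin: "finite I" and sub: "{T} \<times> {..<N} \<subseteq> I"
    and q: "\<And>j. j < N \<Longrightarrow> q (T, j) = bernoulli_pmf r" and r: "0 \<le> r" "r \<le> 1"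
  shows "binomial_pmf N r = map_pmf (\<lambda>\<omega>. card {j. j < N \<and> \<omega> (T, j)}) (Pi_pmf I False q)"
proof -
  let ?A = "{T} \<times> {..<N}"
  have finA: "finite ?A" by simp
  have cA: "card ?A = N" by (simp add: card_cartesian_product)
  have "binomial_pmf N r = map_pmf (\<lambda>f. card {x\<in>?A. f x}) (Pi_pmf ?A False (\<lambda>_. bernoulli_pmf r))"
    by (rule binomial_pmf_altdef'[OF finA cA]) (use r in auto)
  also have "Pi_pmf ?A False (\<lambda>_. bernoulli_pmf r) = Pi_pmf ?A False q"
    by (intro Pi_pmf_cong) (auto simp: q)
  also have "\<dots> = map_pmf (\<lambda>f x. if x \<in> ?A then f x else False) (Pi_pmf I False q)"
    by (rule Pi_pmf_subset[OF fin sub])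
  also have "map_pmf (\<lambda>f. card {x\<in>?A. f x}) \<dots> = map_pmf (\<lambda>\<omega>. card {j. j < N \<and> \<omega> (T, j)}) (Pi_pmf I False q)"
  proof -
    have eq: "card {x\<in>?A. (if x \<in> ?A then \<omega> x else False)} = card {j. j < N \<and> \<omega> (T, j)}"
      for \<omega> :: "nat \<times> nat \<Rightarrow> bool"
    proof -
      have "{x\<in>?A. (if x \<in> ?A then \<omega> x else False)} = Pair T ` {j. j < N \<and> \<omega> (T, j)}"
        by auto
      moreover have "inj (Pair T)" by (auto simp: inj_def)
      ultimately show ?thesis
        by (simp add: card_image inj_on_def)
    qed
    show ?thesis unfolding map_pmf_comp by (intro map_pmf_cong refl) (simp only: eq)
  qed
  finally show ?thesis .
qed

theorem lemma15:
  fixes S' :: "'a::linorder set" and n m :: nat and p1 p2 :: real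
    and rel1 rel2 :: "'a \<Rightarrow> real" and x :: 'a
  assumes "n \<ge> 2"
    and "real n / log 2 (real n) = real m"
    and "finite S'" and "card S' = m"
    and "0 \<le> p1" "p1 < 1/2" "0 \<le> p2" "p2 < 1/2"
    and "\<And>y. y \<in> S' \<Longrightarrow> 0 \<le> rel1 y \<and> rel1 y \<le> 1"
    and "\<And>y. y \<in> S' \<Longrightarrow> 0 \<le> rel2 y \<and> rel2 y \<le> 1"
    and "\<And>y. y \<in> S_minus S' (1/6) \<Longrightarrow> rel1 y \<ge> 1 - p1"
    and "\<And>y. y \<in> S_plus S' (1/3) \<Longrightarrow> rel1 y \<le> p1"
    and "\<And>y. y \<in> S_minus S' (1/3) \<Longrightarrow> rel2 y \<ge> 1 - p2"
    and "\<And>y. y \<in> S_plus S' (3/4) \<Longrightarrow> rel2 y \<le> p2"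
    and "x \<in> S_plus S' (3/4)"
  shows "measure_pmf.prob (answers p1 p2 n (rel1 x) (rel2 x)) (passes_all p1 p2 n)
           \<le> 2 powr (- real n)"
proof -
  define r where "r = rel2 x"
  define T where "T = eta n"
  define N where "N = test_size p1 p2 n T"
  define c where "c = c_const p2"
  have xS: "x \<in> S'" using assms(15) by (simp add: S_plus_def)
  have r0: "0 \<le> r" and r1: "r \<le> 1" using assms(10)[OF xS] by (auto simp: r_def)
  have rp: "r \<le> p2" using assms(14)[OF assms(15)] by (simp add: r_def)
  have T1: "T \<ge> 1" by (simp add: T_def eta_def)
  have N_eq: "N = 2 * nat \<lceil>2 ^ T * ln (real n)\<rceil> * c + 1"
    using T1 by (simp add: N_def test_size_def c_def)
  have Npos: "N > 0" by (simp add: N_eq)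
  have fin: "finite (query_idx p1 p2 n)"
  proof -
    have "query_idx p1 p2 n \<subseteq> {..eta n} \<times> {..<Max ((test_size p1 p2 n) ` {..eta n})}"
    proof
      fix z assume "z \<in> query_idx p1 p2 n"
      then obtain t j where z: "z = (t, j)" "t \<le> eta n" "j < test_size p1 p2 n t"
        by (auto simp: query_idx_def)
      have "test_size p1 p2 n t \<le> Max ((test_size p1 p2 n) ` {..eta n})"
        using z by (intro Max_ge) auto
      hence "j < Max ((test_size p1 p2 n) ` {..eta n})" using z(3) by linarith
      with z show "z \<in> {..eta n} \<times> {..<Max ((test_size p1 p2 n) ` {..eta n})}" by auto
    qed
    thus ?thesis by (rule finite_subset) auto
  qed
  have sub: "{T} \<times> {..<N} \<subseteq> query_idx p1 p2 n"
    by (auto simp: query_idx_def T_def N_def)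
  have binom: "binomial_pmf N r = map_pmf (\<lambda>\<omega>. card {j. j < N \<and> \<omega> (T, j)}) (answers p1 p2 n (rel1 x) (rel2 x))"
    unfolding answers_def
    by (rule count_distr[OF fin sub]) (use T1 r0 r1 in \<open>auto simp: r_def\<close>)
  define \<epsilon> where "\<epsilon> = real N * (1/2 - r)"
  have eps0: "\<epsilon> \<ge> 0" using rp assms(8) by (simp add: \<epsilon>_def)
  have "measure_pmf.prob (answers p1 p2 n (rel1 x) (rel2 x)) (passes_all p1 p2 n)
        \<le> measure_pmf.prob (answers p1 p2 n (rel1 x) (rel2 x)) {\<omega>. 2 * card {j. j < N \<and> \<omega> (T, j)} > N}"
    by (intro measure_pmf.finite_measure_mono) (auto simp: passes_all_def N_def T_def)
  also have "\<dots> = measure_pmf.prob (binomial_pmf N r) {k. 2 * k > N}"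
    by (simp add: binom)
  also have "\<dots> \<le> measure_pmf.prob (binomial_pmf N r) {k. real k \<ge> real N * r + \<epsilon>}"
    by (intro measure_pmf.finite_measure_mono) (auto simp: \<epsilon>_def algebra_simps)
  also have "\<dots> \<le> exp (-2 * \<epsilon>\<^sup>2 / real N)"
    by (rule binomial_distribution.prob_ge[OF _ Npos eps0]) (use r0 r1 in \<open>simp add: binomial_distribution_def\<close>)
  also have "\<dots> \<le> 2 powr (- real n)"
  proof -
    have n2: "real n \<ge> 2" using assms(1) by simp
    have lg: "log 2 (real n) \<ge> 1" using n2 by simp
    have lnn: "ln (real n) > 0" using n2 by simp
    define z where "z = real n / log 2 (real n)"
    have z0: "z > 0" using lg n2 by (simp add: z_def)
    have h1: "2 ^ T \<ge> 2 * z"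
    proof -
      have "z = 2 powr (log 2 z)" using z0 by simp
      also have "\<dots> \<le> 2 powr real (nat \<lceil>log 2 z\<rceil>)"
        by (intro powr_mono) linarith+
      finally have "z \<le> 2 ^ nat \<lceil>log 2 z\<rceil>" by (simp add: powr_realpow)
      thus ?thesis by (simp add: T_def eta_def z_def)
    qed
    have h2: "2 ^ T * ln (real n) \<ge> 2 * real n * ln 2"
    proof -
      have "z * ln (real n) = real n * ln 2"
        using lnn by (simp add: z_def log_def)
      moreover have "2 ^ T * ln (real n) \<ge> 2 * z * ln (real n)"
        using h1 lnn by (intro mult_right_mono) auto
      ultimately show ?thesis by simp
    qed
    have h3: "real N \<ge> 2 * (2 ^ T * ln (real n)) * c"
    proof -
      have "real (nat \<lceil>2 ^ T * ln (real n)\<rceil>) \<ge> 2 ^ T * ln (real n)" by linarith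
      hence "real (2 * nat \<lceil>2 ^ T * ln (real n)\<rceil> * c) \<ge> 2 * (2 ^ T * ln (real n)) * c"
        by (simp add: mult_right_mono)
      thus ?thesis by (simp add: N_eq)
    qed
    have q0: "(1 - 2 * p2)^2 > 0" using assms(8) by simp
    have h4: "real c * (1 - 2 * p2)^2 \<ge> 2"
    proof -
      have "real c \<ge> 4 * (1 - p2) / (1 - 2 * p2)^2"
        unfolding c_def c_const_def by linarith
      hence "real c * (1 - 2 * p2)^2 \<ge> 4 * (1 - p2)"
        using q0 by (simp add: divide_le_eq)
      moreover have "4 * (1 - p2) \<ge> 2" using assms(8) by simp
      ultimately show ?thesis by (rule order_trans[rotated])
    qed
    have h5: "(1/2 - r)^2 \<ge> (1 - 2 * p2)^2 / 4"
    proof -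
      have "(1/2 - p2)^2 \<le> (1/2 - r)^2" using rp assms(8) by (intro power_mono) auto
      moreover have "(1/2 - p2)^2 = (1 - 2 * p2)^2 / 4" by (simp add: power2_eq_square field_simps)
      ultimately show ?thesis by simp
    qed
    define L where "L = 2 ^ T * ln (real n)"
    have L0: "L \<ge> 0" using lnn by (simp add: L_def)
    have "2 * real N * (1/2 - r)^2 \<ge> 2 * (2 * L * c) * ((1 - 2 * p2)^2 / 4)"
      using h3 h5 L0 q0 unfolding L_def[symmetric]
      by (intro mult_mono mult_left_mono) auto
    also have "2 * (2 * L * c) * ((1 - 2 * p2)^2 / 4) = L * (real c * (1 - 2 * p2)^2)" by simp
    also have "\<dots> \<ge> L * 2" using h4 L0 by (intro mult_left_mono) auto
    finally have "2 * real N * (1/2 - r)^2 \<ge> 2 * L" by linarith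
    hence key: "2 * real N * (1/2 - r)^2 \<ge> real n * ln 2"
    proof -
      have "real n * ln 2 \<ge> 0" by simp
      thus ?thesis using h2 \<open>2 * real N * (1/2 - r)^2 \<ge> 2 * L\<close> unfolding L_def[symmetric] by linarith
    qed
    have "-2 * \<epsilon>\<^sup>2 / real N = - (2 * real N * (1/2 - r)^2)"
      using Npos by (simp add: \<epsilon>_def power2_eq_square field_simps)
    hence "exp (-2 * \<epsilon>\<^sup>2 / real N) \<le> exp (- (real n * ln 2))" using key by simp
    also have "\<dots> = 2 powr (- real n)" by (simp add: powr_def)
    finally show ?thesis .
  qed
  finally show ?thesis .
qed

end
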